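(* Let the branching factor satisfy $b>1$, let $\ell^*$ be the peak of the single-peaked sequence $\{\lambda_i\}$ and $\gamma>1$ a constant with $\sum_{j\ge i}\lambda_j\le\gamma\lambda_i$ for all $i\ge\ell^*+2$. Then for every $i$ with $\ell^*+1\le i\le h$, $x_i\le\gamma\,(h-i)$.
   Context: Galton–Watson branching process on an infinite $d$-ary tree (root at level $0$) with offspring distribution $D=\{c_j\}_{j=0}^d$, branching factor $b=\sum_j jc_j$; each non-root node independently holds an answer with probability $1/n$. Let $t(x)=\sum_jc_jx^j(1-\frac1n)^j$, $\phi_0=1$, $\phi_i=t(\phi_{i-1})$, $\lambda_i=\phi_{i-1}-\phi_i$. For $b>1$ the sequence $\{\lambda_i\}$ is single-peaked: there is a level $\ell^*$ with $\lambda_{i-1}\le\lambda_i$ for $i\le\ell^*$ and $\lambda_j>\lambda_{j+1}$ for $j\ge\ell^*$, and there is a constant $\gamma>1$ (independent of $n$) with $\sum_{j\ge i}\lambda_j\le\gamma\lambda_i$ for all $i\ge\ell^*+2$. For a level $h$, define $x_h=0$ and for $i\le h-1$, $x_i=\max_{i+1\le j\le h}\{x_j+\frac{j-i}{\lambda_{i+1}}\sum_{\ell=i+1}^h\lambda_\ell\}$ (the direct referral rewards of the DR mechanism). *)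

theory Defs
  imports Complex_Main
begin

text \<open>Offspring distribution c_0..c_d, answer probability 1/n.\<close>

definition gw_t :: "(nat \<Rightarrow> real) \<Rightarrow> nat \<Rightarrow> nat \<Rightarrow> real \<Rightarrow> real" where
  "gw_t c d n x = (\<Sum>j\<le>d. c j * x ^ j * (1 - 1 / real n) ^ j)"

primrec gw_phi :: "(nat \<Rightarrow> real) \<Rightarrow> nat \<Rightarrow> nat \<Rightarrow> nat \<Rightarrow> real" where
  "gw_phi c d n 0 = 1"
| "gw_phi c d n (Suc i) = gw_t c d n (gw_phi c d n i)"

text \<open>lambda_i = phi_(i-1) - phi_i, meaningful for i >= 1.\<close>
definition gw_lambda :: "(nat \<Rightarrow> real) \<Rightarrow> nat \<Rightarrow> nat \<Rightarrow> nat \<Rightarrow> real" where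
  "gw_lambda c d n i = gw_phi c d n (i - 1) - gw_phi c d n i"

definition branching :: "(nat \<Rightarrow> real) \<Rightarrow> nat \<Rightarrow> real" where
  "branching c d = (\<Sum>j\<le>d. real j * c j)"

text \<open>Auxiliary: dr_aux lam h k is the DR reward x at level h - k (for k \<le> h),
  computed by recursion on the distance k to level h.
  x_h = 0;  x_i = max_{i+1\<le>j\<le>h} (x_j + (j-i)/lam(i+1) * sum_{l=i+1}^h lam l).
  With i = h - Suc k, the index j = h - k' ranges over k' \<in> {..k}.\<close>
fun dr_aux :: "(nat \<Rightarrow> real) \<Rightarrow> nat \<Rightarrow> nat \<Rightarrow> real" where
  "dr_aux lam h 0 = 0"
| "dr_aux lam h (Suc k) =
     Max ((\<lambda>k'. dr_aux lam h k' + real (Suc k - k') / lam (h - k) * (\<Sum>l\<in>{h - k..h}. lam l)) ` {..k})"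

definition dr_reward :: "(nat \<Rightarrow> real) \<Rightarrow> nat \<Rightarrow> nat \<Rightarrow> real" where
  "dr_reward lam h i = dr_aux lam h (h - i)"

end

theory Submission
  imports Defs
begin

lemma t_mono:
  assumes "\<forall>j\<le>d. c j \<ge> 0" "n \<ge> 1" "0 \<le> x" "x \<le> y"
  shows "gw_t c d n x \<le> gw_t c d n y"
proof -
  have q: "0 \<le> 1 - 1 / real n" using assms(2) by (simp add: field_simps)
  show ?thesis unfolding gw_t_def
    apply (rule sum_mono)
    using assms q by (auto intro!: mult_right_mono mult_left_mono power_mono)
qed

lemma t_nonneg:
  assumes "\<forall>j\<le>d. c j \<ge> 0" "n \<ge> 1" "0 \<le> x"
  shows "0 \<le> gw_t c d n x"
proof -
  have q: "0 \<le> 1 - 1 / real n" using assms(2) by (simp add: field_simps)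
  show ?thesis unfolding gw_t_def
    using assms q by (auto intro!: sum_nonneg)
qed

lemma t_one:
  assumes "\<forall>j\<le>d. c j \<ge> 0" "n \<ge> 1" "(\<Sum>j\<le>d. c j) = 1"
  shows "gw_t c d n 1 \<le> 1"
proof -
  have q: "0 \<le> 1 - 1 / real n" "1 - 1 / real n \<le> 1" using assms(2) by (simp_all add: field_simps)
  have "gw_t c d n 1 \<le> (\<Sum>j\<le>d. c j)" unfolding gw_t_def
    apply (rule sum_mono)
    using assms q by (auto intro!: mult_left_le power_le_one)
  then show ?thesis using assms(3) by simp
qed

lemma phi_props:
  assumes "\<forall>j\<le>d. c j \<ge> 0" "n \<ge> 1" "(\<Sum>j\<le>d. c j) = 1"
  shows "0 \<le> gw_phi c d n (Suc i) \<and> gw_phi c d n (Suc i) \<le> gw_phi c d n i"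
proof (induction i)
  case 0
  then show ?case using t_one[OF assms] t_nonneg[OF assms(1,2), of 1] by simp
next
  case (Suc i)
  then show ?case using t_mono[OF assms(1,2)] t_nonneg[OF assms(1,2)] by simp
qed

theorem proposition5p3:
  fixes c :: "nat \<Rightarrow> real" and d n :: nat and lstar h i :: nat and \<gamma> :: real
  defines "lam \<equiv> gw_lambda c d n"
  assumes c_nonneg: "\<forall>j\<le>d. c j \<ge> 0"
    and c_sum: "(\<Sum>j\<le>d. c j) = 1"
    and n_pos: "n \<ge> 1"
    and b_gt1: "branching c d > 1"
    and lstar_pos: "lstar \<ge> 1"
    and peak_up: "\<forall>i. 2 \<le> i \<and> i \<le> lstar \<longrightarrow> lam (i - 1) \<le> lam i"
    and peak_down: "\<forall>j\<ge>lstar. lam j > lam (j + 1)"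
    and gamma_gt1: "\<gamma> > 1"
    and tail: "\<forall>k\<ge>lstar + 2. (\<Sum>j. lam (k + j)) \<le> \<gamma> * lam k"
    and i_range: "lstar + 1 \<le> i" "i \<le> h"
  shows "dr_reward lam h i \<le> \<gamma> * real (h - i)"
proof -
  note P = phi_props[OF c_nonneg n_pos c_sum]
  have lnn: "lam k \<ge> 0" for k
  proof (cases k)
    case 0 then show ?thesis by (simp add: lam_def gw_lambda_def)
  next
    case (Suc m) then show ?thesis using P[of m] by (simp add: lam_def gw_lambda_def)
  qed
  have tele: "(\<Sum>j<m. lam (k + j)) = gw_phi c d n (k - 1) - gw_phi c d n (k + m - 1)"
    if "k \<ge> 1" for k m
  proof (induction m)
    case 0 then show ?case by simp
  next
    case (Suc m)
    have "k + Suc m - 1 = Suc (k + m - 1)" "k + m - 1 + 1 = k + m" using that by auto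
    then show ?case using Suc by (simp add: lam_def gw_lambda_def)
  qed
  have phinn: "gw_phi c d n m \<ge> 0" for m
    using P[of "m - 1"] by (cases m) auto
  have phile: "gw_phi c d n m \<le> 1" for m
  proof (induction m)
    case 0 then show ?case by simp
  next
    case (Suc m) then show ?case using P[of m] by linarith
  qed
  have summ: "summable (\<lambda>j. lam (k + j))" if "k \<ge> 1" for k
  proof (rule summableI_nonneg_bounded)
    show "0 \<le> lam (k + j)" for j using lnn .
    show "sum (\<lambda>j. lam (k + j)) {..<m} \<le> 1" for m
      using tele[OF that, of m] phinn[of "k + m - 1"] phile[of "k - 1"] by linarith
  qed
  have part: "(\<Sum>l\<in>{a..b}. lam l) \<le> (\<Sum>j. lam (a + j))" if "a \<ge> 1" for a b
  proof -
    have "(\<Sum>l\<in>{a..b}. lam l) \<le> (\<Sum>l\<in>(\<lambda>j. a + j) ` {..<Suc b}. lam l)"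
      proof (rule sum_mono2)
      show "{a..b} \<subseteq> (\<lambda>j. a + j) ` {..<Suc b}"
      proof
        fix x assume "x \<in> {a..b}"
        then have "x = a + (x - a)" "x - a \<in> {..<Suc b}" by auto
        then show "x \<in> (\<lambda>j. a + j) ` {..<Suc b}" by blast
      qed
    qed (auto simp: lnn)
    also have "\<dots> = (\<Sum>j<Suc b. lam (a + j))"
      by (subst sum.reindex) (auto simp: inj_on_def)
    also have "\<dots> \<le> (\<Sum>j. lam (a + j))"
      by (rule sum_le_suminf[OF summ[OF that]]) (auto simp: lnn)
    finally show ?thesis .
  qed
  have pos: "lam j > 0" if "j \<ge> lstar" for j
    using peak_down that lnn[of "j+1"] by force
  have ratio: "(\<Sum>l\<in>{m..h}. lam l) / lam m \<le> \<gamma>" if "m \<ge> lstar + 2" for m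
  proof -
    have "(\<Sum>l\<in>{m..h}. lam l) \<le> \<gamma> * lam m"
      using part[of m h] tail that by force
    then show ?thesis using pos[of m] that by (simp add: divide_le_eq)
  qed
  have main: "k + lstar + 1 \<le> h \<longrightarrow> dr_aux lam h k \<le> \<gamma> * real k" for k
  proof (induction k rule: less_induct)
    case (less k)
    show ?case
    proof (cases k)
      case 0 then show ?thesis by simp
    next
      case (Suc k0)
      show ?thesis
      proof
        assume hk: "k + lstar + 1 \<le> h"
        have r: "(\<Sum>l\<in>{h - k0..h}. lam l) / lam (h - k0) \<le> \<gamma>"
          using ratio[of "h - k0"] hk Suc by auto
        have "dr_aux lam h k' + real (Suc k0 - k') / lam (h - k0) * (\<Sum>l\<in>{h - k0..h}. lam l)
              \<le> \<gamma> * real (Suc k0)" if "k' \<le> k0" for k'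
        proof -
          have ih: "dr_aux lam h k' \<le> \<gamma> * real k'" using less[of k'] that hk Suc by auto
          have "real (Suc k0 - k') / lam (h - k0) * (\<Sum>l\<in>{h - k0..h}. lam l)
                = real (Suc k0 - k') * ((\<Sum>l\<in>{h - k0..h}. lam l) / lam (h - k0))" by simp
          also have "\<dots> \<le> real (Suc k0 - k') * \<gamma>"
            by (rule mult_left_mono[OF r]) simp
          finally have "real (Suc k0 - k') / lam (h - k0) * (\<Sum>l\<in>{h - k0..h}. lam l)
                \<le> real (Suc k0 - k') * \<gamma>" .
          moreover have "real (Suc k0 - k') = real (Suc k0) - real k'" using that by simp
          ultimately show ?thesis using ih by (simp add: algebra_simps)
        qed
        then show "dr_aux lam h k \<le> \<gamma> * real k" using Suc by (simp add: Max_le_iff)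
      qed
    qed
  qed
  show ?thesis unfolding dr_reward_def using main[of "h - i"] i_range by simp
qed

end
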